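(* Let $p=(p_1,p_2,p_3)$, $q=(q_1,q_2,q_3)\in\mathbb Z^3$ with $\sum p_i=\sum q_i$, $p_1\le p_2\le p_3$, $q_1\le q_2\le q_3$, such that the $S^1_{p,q}$-action on $SU(3)$ is free and $q_2=p_1$ or $q_2=p_3$. Then, up to diffeomorphism of the quotient, the action is one of: (1) $p=(0,0,0)$, $q=(-1,0,1)$; (2) $p=(0,1,1)$, $q=(0,0,2)$.
   Context: $S^1_{p,q}$ acts on $SU(3)$ by $z\star A=\mathrm{diag}(z^{p_1},z^{p_2},z^{p_3})A\,\mathrm{diag}(\bar z^{q_1},\bar z^{q_2},\bar z^{q_3})$; it is free iff $\gcd(p_1-q_{\sigma(1)},p_2-q_{\sigma(2)})=1$ for all $\sigma\in S_3$. Quotients are considered up to the diffeomorphisms induced by permuting the $p_i$, permuting the $q_i$, swapping $p$ and $q$, adding a common integer to all $p_i,q_j$, and replacing $(p,q)$ by $((-p_3,-p_2,-p_1),(-q_3,-q_2,-q_1))$. *)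

theory Defs
  imports "HOL-Analysis.Analysis"
begin

text \<open>Freeness of the circle action z * A = diag(z^p) A diag(conj z^q) on SU(3),
  via the gcd criterion stated in the paper.\<close>
definition free_action :: "int ^ 3 \<Rightarrow> int ^ 3 \<Rightarrow> bool" where
  "free_action p q \<longleftrightarrow>
     (\<forall>\<sigma>. \<sigma> permutes (UNIV :: 3 set) \<longrightarrow>
        gcd (p $ 1 - q $ (\<sigma> 1)) (p $ 2 - q $ (\<sigma> 2)) = 1)"

text \<open>Elementary moves inducing diffeomorphisms of the quotients.\<close>
definition quot_move :: "((int ^ 3) \<times> (int ^ 3)) \<Rightarrow> ((int ^ 3) \<times> (int ^ 3)) \<Rightarrow> bool" where
  "quot_move a b \<longleftrightarrow>
     (let p = fst a; q = snd a; p' = fst b; q' = snd b in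
       (\<exists>\<sigma>. \<sigma> permutes (UNIV :: 3 set) \<and> p' = (\<chi> i. p $ \<sigma> i) \<and> q' = q) \<or>
       (\<exists>\<sigma>. \<sigma> permutes (UNIV :: 3 set) \<and> p' = p \<and> q' = (\<chi> i. q $ \<sigma> i)) \<or>
       (p' = q \<and> q' = p) \<or>
       (\<exists>k::int. p' = (\<chi> i. p $ i + k) \<and> q' = (\<chi> i. q $ i + k)) \<or>
       (p' = vector [- p $ 3, - p $ 2, - p $ 1] \<and> q' = vector [- q $ 3, - q $ 2, - q $ 1]))"

definition quot_equiv :: "((int ^ 3) \<times> (int ^ 3)) \<Rightarrow> ((int ^ 3) \<times> (int ^ 3)) \<Rightarrow> bool" where
  "quot_equiv = equivclp quot_move"

end

theory Submission
  imports Defs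
begin

lemma inst:
  assumes "free_action p q" "\<sigma> permutes (UNIV :: 3 set)"
  shows "gcd (p $ 1 - q $ (\<sigma> 1)) (p $ 2 - q $ (\<sigma> 2)) = 1"
  using assms unfolding free_action_def by blast

lemma perm12: "Transposition.transpose (1::3) 2 permutes UNIV"
  by (rule permutes_swap_id) auto
lemma perm23: "Transposition.transpose (2::3) 3 permutes UNIV"
  by (rule permutes_swap_id) auto
lemma perm_c: "(Transposition.transpose (1::3) 2 \<circ> Transposition.transpose (2::3) 3) permutes UNIV"
  by (rule permutes_compose[OF perm23 perm12])
lemma perm_d: "(Transposition.transpose (2::3) 3 \<circ> Transposition.transpose (1::3) 2) permutes UNIV"
  by (rule permutes_compose[OF perm12 perm23])

lemma ev: "Transposition.transpose (1::3) 2 1 = 2" "Transposition.transpose (1::3) 2 2 = 1"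
  "Transposition.transpose (2::3) 3 1 = 1" "Transposition.transpose (2::3) 3 2 = 3"
  "Transposition.transpose (1::3) 2 3 = 3" "Transposition.transpose (2::3) 3 3 = 2"
  by (auto simp: Transposition.transpose_def)

lemma gcd0: "gcd (0::int) x = 1 \<Longrightarrow> x = 1 \<or> x = -1" by auto
lemma gcdneg: "gcd (a::int) (-a) = 1 \<Longrightarrow> a = 1 \<or> a = -1" by auto

lemma shiftmove:
  assumes "p' = (\<chi> i. p $ i + k)" "q' = (\<chi> i. q $ i + k)"
  shows "quot_equiv (p, q) (p', q')"
  unfolding quot_equiv_def by (rule r_into_equivclp) (use assms in \<open>auto simp: quot_move_def Let_def\<close>)

lemma negmove:
  assumes "p' = vector [- p $ 3, - p $ 2, - p $ 1]" "q' = vector [- q $ 3, - q $ 2, - q $ 1]"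
  shows "quot_equiv (p, q) (p', q')"
  unfolding quot_equiv_def by (rule r_into_equivclp) (use assms in \<open>auto simp: quot_move_def Let_def\<close>)

theorem mainTheorem3:
  fixes p q :: "int ^ 3"
  assumes "p $ 1 + p $ 2 + p $ 3 = q $ 1 + q $ 2 + q $ 3"
    and "p $ 1 \<le> p $ 2" and "p $ 2 \<le> p $ 3"
    and "q $ 1 \<le> q $ 2" and "q $ 2 \<le> q $ 3"
    and "free_action p q"
    and "q $ 2 = p $ 1 \<or> q $ 2 = p $ 3"
  shows "quot_equiv (p, q) (vector [0, 0, 0], vector [-1, 0, 1]) \<or>
         quot_equiv (p, q) (vector [0, 1, 1], vector [0, 0, 2])"
proof -
  have g12: "gcd (p $ 1 - q $ 2) (p $ 2 - q $ 1) = 1"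
    using inst[OF assms(6) perm12] by (simp add: ev)
  have g13: "gcd (p $ 1 - q $ 1) (p $ 2 - q $ 3) = 1"
    using inst[OF assms(6) perm23] by (simp add: ev)
  have gc: "gcd (p $ 1 - q $ 2) (p $ 2 - q $ 3) = 1"
    using inst[OF assms(6) perm_c] by (simp add: ev)
  have gd: "gcd (p $ 1 - q $ 3) (p $ 2 - q $ 1) = 1"
    using inst[OF assms(6) perm_d] by (simp add: ev)
  have s: "p $ 1 + p $ 2 + p $ 3 = q $ 1 + q $ 2 + q $ 3" by (rule assms(1))
  consider (A) "q $ 2 = p $ 1" | (B) "q $ 2 = p $ 3" using assms(7) by blast
  then show ?thesis
  proof cases
    case A
    have h1: "p $ 2 - q $ 1 = 1 \<or> p $ 2 - q $ 1 = -1" using g12 A by (intro gcd0) simp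
    have h2: "p $ 2 - q $ 3 = 1 \<or> p $ 2 - q $ 3 = -1" using gc A by (intro gcd0) simp
    define a where "a = p $ 1"
    have "(p $ 2 = a \<and> p $ 3 = a \<and> q $ 1 = a - 1 \<and> q $ 2 = a \<and> q $ 3 = a + 1) \<or>
          (p $ 2 = a + 1 \<and> p $ 3 = a + 1 \<and> q $ 1 = a \<and> q $ 2 = a \<and> q $ 3 = a + 2)"
      using h1 h2 A s assms(2-5) unfolding a_def by linarith
    then show ?thesis
    proof
      assume H: "p $ 2 = a \<and> p $ 3 = a \<and> q $ 1 = a - 1 \<and> q $ 2 = a \<and> q $ 3 = a + 1"
      have "quot_equiv (p, q) (vector [0, 0, 0], vector [-1, 0, 1])"
        by (rule shiftmove[where k="-a"]) (use H a_def in \<open>auto simp: vec_eq_iff forall_3\<close>)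
      then show ?thesis ..
    next
      assume H: "p $ 2 = a + 1 \<and> p $ 3 = a + 1 \<and> q $ 1 = a \<and> q $ 2 = a \<and> q $ 3 = a + 2"
      have "quot_equiv (p, q) (vector [0, 1, 1], vector [0, 0, 2])"
        by (rule shiftmove[where k="-a"]) (use H a_def in \<open>auto simp: vec_eq_iff forall_3\<close>)
      then show ?thesis ..
    qed
  next
    case B
    have h1: "p $ 1 - q $ 1 = 1 \<or> p $ 1 - q $ 1 = -1"
    proof (rule gcdneg)
      have "p $ 2 - q $ 3 = - (p $ 1 - q $ 1)" using s B by linarith
      then show "gcd (p $ 1 - q $ 1) (- (p $ 1 - q $ 1)) = 1" using g13 by simp
    qed
    have h2: "p $ 1 - q $ 3 = 1 \<or> p $ 1 - q $ 3 = -1"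
    proof (rule gcdneg)
      have "p $ 2 - q $ 1 = - (p $ 1 - q $ 3)" using s B by linarith
      then show "gcd (p $ 1 - q $ 3) (- (p $ 1 - q $ 3)) = 1" using gd by simp
    qed
    define a where "a = p $ 3"
    have "(p $ 1 = a \<and> p $ 2 = a \<and> q $ 1 = a - 1 \<and> q $ 2 = a \<and> q $ 3 = a + 1) \<or>
          (p $ 1 = a - 1 \<and> p $ 2 = a - 1 \<and> q $ 1 = a - 2 \<and> q $ 2 = a \<and> q $ 3 = a)"
      using h1 h2 B s assms(2-5) unfolding a_def by linarith
    then show ?thesis
    proof
      assume H: "p $ 1 = a \<and> p $ 2 = a \<and> q $ 1 = a - 1 \<and> q $ 2 = a \<and> q $ 3 = a + 1"
      have "quot_equiv (p, q) (vector [0, 0, 0], vector [-1, 0, 1])"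
        by (rule shiftmove[where k="-a"]) (use H a_def in \<open>auto simp: vec_eq_iff forall_3\<close>)
      then show ?thesis ..
    next
      assume H: "p $ 1 = a - 1 \<and> p $ 2 = a - 1 \<and> q $ 1 = a - 2 \<and> q $ 2 = a \<and> q $ 3 = a"
      have e1: "quot_equiv (p, q) (vector [-1, -1, 0], vector [-2, 0, 0])"
        by (rule shiftmove[where k="-a"]) (use H a_def in \<open>auto simp: vec_eq_iff forall_3\<close>)
      have e2: "quot_equiv (vector [-1, -1, 0] :: int ^ 3, vector [-2, 0, 0] :: int ^ 3) (vector [0, 1, 1], vector [0, 0, 2])"
        by (rule negmove) (auto simp: vec_eq_iff forall_3)
      have "quot_equiv (p, q) (vector [0, 1, 1], vector [0, 0, 2])"
        using e1 e2 unfolding quot_equiv_def by (rule equivclp_trans)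
      then show ?thesis ..
    qed
  qed
qed

end
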